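(* Let $a>0$, $q\neq0$, $p\in(4,6)$. For every $t>0$ and every $u\in\mathcal{E}_r$, $$I_a(u)-I_a(t^2u(t\,\cdot))\ge\frac{1-t^3}{3}J_a(u).$$
   Context: $D^{1,2}(\mathbb{R}^3)=\{u\in L^6(\mathbb{R}^3):|\nabla u|\in L^2(\mathbb{R}^3)\}$. $\mathcal{K}_a(x)=\frac{1-e^{-|x|/a}}{|x|}$, $V(f,g)=\int\int\mathcal{K}_a(x-y)f(x)g(y)\,dx\,dy$, $\mathcal{E}_r$ the set of radial $u\in D^{1,2}(\mathbb{R}^3)$ with $V(u^2,u^2)<\infty$. $I_a(u)=\frac12\|\nabla u\|_2^2+\frac{q^2}{4}V(u^2,u^2)-\frac1p\|u\|_p^p$ and $$J_a(u)=\frac32\|\nabla u\|_2^2-\frac{2p-3}{p}\|u\|_p^p+\frac{3q^2}{4}\int_{\mathbb{R}^3}\int_{\mathbb{R}^3}\frac{1-e^{-\frac{|x-y|}{a}}-\frac{|x-y|}{3a}e^{-\frac{|x-y|}{a}}}{|x-y|}u^2(x)u^2(y)\,dx\,dy.$$ *)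

theory Defs
  imports "HOL-Analysis.Analysis"
begin

type_synonym R3 = "real ^ 3"

coinductive smooth_fn :: "('a::euclidean_space \<Rightarrow> real) \<Rightarrow> bool" where
  "(\<forall>x. f differentiable (at x)) \<Longrightarrow>
   (\<forall>v. smooth_fn (\<lambda>x. frechet_derivative f (at x) v)) \<Longrightarrow> smooth_fn f"

definition test_fn :: "('a::euclidean_space \<Rightarrow> real) \<Rightarrow> bool" where
  "test_fn \<phi> \<longleftrightarrow> smooth_fn \<phi> \<and> bounded {x. \<phi> x \<noteq> 0}"

definition weak_grad :: "(R3 \<Rightarrow> real) \<Rightarrow> (R3 \<Rightarrow> R3) \<Rightarrow> bool" where
  "weak_grad u g \<longleftrightarrow>
     (\<forall>K. compact K \<longrightarrow> set_integrable lborel K u \<and> set_integrable lborel K g) \<and>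
     (\<forall>\<phi>. test_fn \<phi> \<longrightarrow> (\<forall>i\<in>Basis.
        (\<integral>x. u x * frechet_derivative \<phi> (at x) i \<partial>lborel) =
        - (\<integral>x. (g x \<bullet> i) * \<phi> x \<partial>lborel)))"

definition D12 :: "(R3 \<Rightarrow> real) \<Rightarrow> bool" where
  "D12 u \<longleftrightarrow> u \<in> borel_measurable lborel \<and> integrable lborel (\<lambda>x. \<bar>u x\<bar> ^ 6) \<and>
     (\<exists>g. weak_grad u g \<and> g \<in> borel_measurable lborel \<and>
          integrable lborel (\<lambda>x. (norm (g x))\<^sup>2))"

definition grad :: "(R3 \<Rightarrow> real) \<Rightarrow> R3 \<Rightarrow> R3" where
  "grad u = (SOME g. weak_grad u g \<and> g \<in> borel_measurable lborel \<and>
                     integrable lborel (\<lambda>x. (norm (g x))\<^sup>2))"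

definition radial :: "(R3 \<Rightarrow> real) \<Rightarrow> bool" where
  "radial u \<longleftrightarrow> (\<forall>x y. norm x = norm y \<longrightarrow> u x = u y)"

definition Kern :: "real \<Rightarrow> R3 \<Rightarrow> real" where
  "Kern a z = (1 - exp (- norm z / a)) / norm z"

definition Vpot :: "real \<Rightarrow> (R3 \<Rightarrow> real) \<Rightarrow> (R3 \<Rightarrow> real) \<Rightarrow> real" where
  "Vpot a f g = (\<integral>z. Kern a (fst z - snd z) * f (fst z) * g (snd z) \<partial>(lborel \<Otimes>\<^sub>M lborel))"

definition Er :: "real \<Rightarrow> (R3 \<Rightarrow> real) \<Rightarrow> bool" where
  "Er a u \<longleftrightarrow> D12 u \<and> radial u \<and>
     (\<integral>\<^sup>+z. ennreal (Kern a (fst z - snd z) * (u (fst z))\<^sup>2 * (u (snd z))\<^sup>2)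
        \<partial>(lborel \<Otimes>\<^sub>M lborel)) < \<infinity>"

definition grad_sq :: "(R3 \<Rightarrow> real) \<Rightarrow> real" where
  "grad_sq u = (\<integral>x. (norm (grad u x))\<^sup>2 \<partial>lborel)"

definition Lp_pow :: "real \<Rightarrow> (R3 \<Rightarrow> real) \<Rightarrow> real" where
  "Lp_pow p u = (\<integral>x. \<bar>u x\<bar> powr p \<partial>lborel)"

definition I_a :: "real \<Rightarrow> real \<Rightarrow> real \<Rightarrow> (R3 \<Rightarrow> real) \<Rightarrow> real" where
  "I_a a q p u = 1/2 * grad_sq u + q\<^sup>2 / 4 * Vpot a (\<lambda>x. (u x)\<^sup>2) (\<lambda>x. (u x)\<^sup>2)
                 - 1/p * Lp_pow p u"

definition KernJ :: "real \<Rightarrow> R3 \<Rightarrow> real" where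
  "KernJ a z = (1 - exp (- norm z / a) - norm z / (3 * a) * exp (- norm z / a)) / norm z"

definition J_a :: "real \<Rightarrow> real \<Rightarrow> real \<Rightarrow> (R3 \<Rightarrow> real) \<Rightarrow> real" where
  "J_a a q p u = 3/2 * grad_sq u - (2*p - 3) / p * Lp_pow p u
     + 3 * q\<^sup>2 / 4 * (\<integral>z. KernJ a (fst z - snd z) * (u (fst z))\<^sup>2 * (u (snd z))\<^sup>2
                         \<partial>(lborel \<Otimes>\<^sub>M lborel))"

end

theory Submission
  imports Defs "HOL-Computational_Algebra.Polynomial"
begin

lemma smooth_fn_D:
  assumes "smooth_fn f"
  shows "\<forall>x. f differentiable (at x)" "smooth_fn (\<lambda>x. frechet_derivative f (at x) v)"
  using assms by (auto elim: smooth_fn.cases)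

lemma smooth_fn_const: "smooth_fn (\<lambda>x::'a::euclidean_space. c)"
proof -
  have "smooth_fn f" if "\<exists>c. f = (\<lambda>x::'a. c)" for f
    using that
  proof (coinduction arbitrary: f)
    case (smooth_fn f)
    then obtain c where f: "f = (\<lambda>x. c)" by blast
    show ?case unfolding f by auto
  qed
  then show ?thesis by blast
qed

inductive SP :: "('a::euclidean_space \<Rightarrow> real) \<Rightarrow> bool" where
  SPm: "smooth_fn f \<Longrightarrow> smooth_fn g \<Longrightarrow> SP (\<lambda>x. f x * g x)"
| SPa: "SP f \<Longrightarrow> SP g \<Longrightarrow> SP (\<lambda>x. f x + g x)"

lemma SP_step:
  assumes "SP h"
  shows "(\<forall>x. h differentiable (at x)) \<and> (\<forall>v. SP (\<lambda>x. frechet_derivative h (at x) v))"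
  using assms
proof (induction rule: SP.induct)
  case (SPm f g)
  have df: "\<And>x. (f has_derivative frechet_derivative f (at x)) (at x)"
    using smooth_fn_D(1)[OF SPm(1)] frechet_derivative_works by blast
  have dg: "\<And>x. (g has_derivative frechet_derivative g (at x)) (at x)"
    using smooth_fn_D(1)[OF SPm(2)] frechet_derivative_works by blast
  have d: "\<And>x. ((\<lambda>x. f x * g x) has_derivative
     (\<lambda>v. f x * frechet_derivative g (at x) v + frechet_derivative f (at x) v * g x)) (at x)"
    by (intro has_derivative_mult df dg)
  have fe: "\<And>x v. frechet_derivative (\<lambda>x. f x * g x) (at x) v =
      f x * frechet_derivative g (at x) v + frechet_derivative f (at x) v * g x"
    by (simp add: frechet_derivative_at[OF d, symmetric])
  show ?case
  proof (intro conjI allI)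
    fix x show "(\<lambda>x. f x * g x) differentiable at x" using d differentiable_def by blast
  next
    fix v
    show "SP (\<lambda>x. frechet_derivative (\<lambda>x. f x * g x) (at x) v)"
      unfolding fe
      by (intro SP.SPa SP.SPm SPm smooth_fn_D(2))
  qed
next
  case (SPa f g)
  have df: "\<And>x. (f has_derivative frechet_derivative f (at x)) (at x)"
    using SPa frechet_derivative_works by blast
  have dg: "\<And>x. (g has_derivative frechet_derivative g (at x)) (at x)"
    using SPa frechet_derivative_works by blast
  have d: "\<And>x. ((\<lambda>x. f x + g x) has_derivative
     (\<lambda>v. frechet_derivative f (at x) v + frechet_derivative g (at x) v)) (at x)"
    by (intro has_derivative_add df dg)
  have fe: "\<And>x v. frechet_derivative (\<lambda>x. f x + g x) (at x) v =
      frechet_derivative f (at x) v + frechet_derivative g (at x) v"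
    by (simp add: frechet_derivative_at[OF d, symmetric])
  show ?case
  proof (intro conjI allI)
    fix x show "(\<lambda>x. f x + g x) differentiable at x" using d differentiable_def by blast
  next
    fix v
    show "SP (\<lambda>x. frechet_derivative (\<lambda>x. f x + g x) (at x) v)"
      unfolding fe using SPa by (intro SP.SPa) auto
  qed
qed

lemma SP_smooth: "SP h \<Longrightarrow> smooth_fn h"
proof (coinduction arbitrary: h)
  case (smooth_fn h)
  then show ?case using SP_step by blast
qed

lemma smooth_fn_mult: "smooth_fn f \<Longrightarrow> smooth_fn g \<Longrightarrow> smooth_fn (\<lambda>x. f x * g x)"
  by (rule SP_smooth, rule SP.SPm)

lemma smooth_fn_prod:
  assumes "finite I" "\<And>i. i \<in> I \<Longrightarrow> smooth_fn (f i)"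
  shows "smooth_fn (\<lambda>x::'a::euclidean_space. \<Prod>i\<in>I. f i x)"
  using assms
proof (induction I rule: finite_induct)
  case empty then show ?case by (simp add: smooth_fn_const)
next
  case (insert a I)
  then show ?case by (simp add: smooth_fn_mult)
qed

lemma smooth_fn_scale:
  assumes "smooth_fn \<phi>"
  shows "smooth_fn (\<lambda>x::'a::euclidean_space. \<phi> (c *\<^sub>R x))"
proof -
  have "smooth_fn h" if "\<exists>\<phi>. smooth_fn \<phi> \<and> h = (\<lambda>x::'a. \<phi> (c *\<^sub>R x))" for h
    using that
  proof (coinduction arbitrary: h)
    case (smooth_fn h)
    then obtain \<phi> where s: "smooth_fn \<phi>" and h: "h = (\<lambda>x::'a. \<phi> (c *\<^sub>R x))" by blast
    have dp: "\<And>y. (\<phi> has_derivative frechet_derivative \<phi> (at y)) (at y)"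
      using smooth_fn_D(1)[OF s] frechet_derivative_works by blast
    have d: "\<And>x. (h has_derivative (\<lambda>v. frechet_derivative \<phi> (at (c *\<^sub>R x)) (c *\<^sub>R v))) (at x)"
      unfolding h
      by (rule has_derivative_compose[where f = "\<lambda>x. c *\<^sub>R x" and g = \<phi>, unfolded o_def])
         (auto intro!: derivative_eq_intros dp)
    have fe: "\<And>x v. frechet_derivative h (at x) v = frechet_derivative \<phi> (at (c *\<^sub>R x)) (c *\<^sub>R v)"
      by (simp add: frechet_derivative_at[OF d, symmetric])
    have diff: "\<forall>x. h differentiable at x" using d differentiable_def by blast
    have der: "\<forall>v. \<exists>\<phi>. smooth_fn \<phi> \<and> (\<lambda>x. frechet_derivative h (at x) v) = (\<lambda>x::'a. \<phi> (c *\<^sub>R x))"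
    proof
      fix v
      have "smooth_fn (\<lambda>y. frechet_derivative \<phi> (at y) (c *\<^sub>R v))" by (rule smooth_fn_D(2)[OF s])
      then show "\<exists>\<phi>. smooth_fn \<phi> \<and> (\<lambda>x. frechet_derivative h (at x) v) = (\<lambda>x::'a. \<phi> (c *\<^sub>R x))"
        unfolding fe by blast
    qed
    show ?case using diff der by blast
  qed
  then show ?thesis using assms by blast
qed

definition smooth1 :: "(real \<Rightarrow> real) \<Rightarrow> bool" where
  "smooth1 f \<longleftrightarrow> (\<exists>D. D 0 = f \<and> (\<forall>n s. (D n has_real_derivative D (Suc n) s) (at s)))"

lemma smooth_fn_lift:
  assumes "smooth1 f"
  shows "smooth_fn (\<lambda>x::'a::euclidean_space. f (\<alpha> * (x \<bullet> i) + \<beta>))"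
proof -
  obtain D where D0: "D 0 = f" and DD: "\<And>n s. (D n has_real_derivative D (Suc n) s) (at s)"
    using assms unfolding smooth1_def by blast
  have "smooth_fn h" if "\<exists>w n. h = (\<lambda>x::'a. w * D n (\<alpha> * (x \<bullet> i) + \<beta>))" for h
    using that
  proof (coinduction arbitrary: h)
    case (smooth_fn h)
    then obtain w n where h: "h = (\<lambda>x::'a. w * D n (\<alpha> * (x \<bullet> i) + \<beta>))" by blast
    have d: "\<And>x. (h has_derivative (\<lambda>v. (w * \<alpha> * (v \<bullet> i)) * D (Suc n) (\<alpha> * (x \<bullet> i) + \<beta>))) (at x)"
    proof -
      fix x
      have "((\<lambda>x::'a. D n (\<alpha> * (x \<bullet> i) + \<beta>)) has_derivative
          (\<lambda>v. D (Suc n) (\<alpha> * (x \<bullet> i) + \<beta>) * (\<alpha> * (v \<bullet> i)))) (at x)"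
        by (rule has_derivative_compose[where f = "\<lambda>x. \<alpha> * (x \<bullet> i) + \<beta>" and g = "D n", unfolded o_def])
           (auto intro!: derivative_eq_intros DD[unfolded has_field_derivative_def])
      then show "(h has_derivative (\<lambda>v. (w * \<alpha> * (v \<bullet> i)) * D (Suc n) (\<alpha> * (x \<bullet> i) + \<beta>))) (at x)"
        unfolding h by (auto intro!: derivative_eq_intros simp: algebra_simps)
    qed
    have fe: "\<And>x v. frechet_derivative h (at x) v = (w * \<alpha> * (v \<bullet> i)) * D (Suc n) (\<alpha> * (x \<bullet> i) + \<beta>)"
      by (simp add: frechet_derivative_at[OF d, symmetric])
    have diff: "\<forall>x. h differentiable at x" using d differentiable_def by blast
    have der: "\<forall>v. \<exists>w n. (\<lambda>x. frechet_derivative h (at x) v) = (\<lambda>x::'a. w * D n (\<alpha> * (x \<bullet> i) + \<beta>))"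
      unfolding fe by blast
    show ?case using diff der by blast
  qed
  then have "smooth_fn (\<lambda>x::'a. 1 * D 0 (\<alpha> * (x \<bullet> i) + \<beta>))" by blast
  then show ?thesis by (simp add: D0)
qed

definition gfun :: "real \<Rightarrow> real" where
  "gfun y = (if 0 < y then exp (- inverse y) else 0)"

fun Pg :: "nat \<Rightarrow> real poly" where
  "Pg 0 = 1"
| "Pg (Suc n) = [:0,0,1:] * (Pg n - pderiv (Pg n))"

definition Dg :: "nat \<Rightarrow> real \<Rightarrow> real" where
  "Dg n y = (if 0 < y then poly (Pg n) (inverse y) * exp (- inverse y) else 0)"

lemma poly_exp_tendsto: "((\<lambda>z. poly Q z * exp (- z)) \<longlongrightarrow> (0::real)) at_top"
proof -
  have eq: "poly Q z * exp (- z) = (\<Sum>i\<le>degree Q. coeff Q i * (z ^ i / exp z))" for z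
    by (simp add: poly_altdef sum_distrib_right exp_minus divide_inverse mult.assoc)
  have "((\<lambda>z. \<Sum>i\<le>degree Q. coeff Q i * (z ^ i / exp z)) \<longlongrightarrow> (\<Sum>i\<le>degree Q. coeff Q i * 0)) at_top"
    by (intro tendsto_sum tendsto_mult tendsto_const tendsto_power_div_exp_0)
  then show ?thesis unfolding eq by simp
qed

lemma Dg_deriv_pos:
  assumes "y > 0"
  shows "((\<lambda>y. poly (Pg n) (inverse y) * exp (- inverse y)) has_real_derivative
     poly (Pg (Suc n)) (inverse y) * exp (- inverse y)) (at y)"
proof -
  have inv: "(inverse has_real_derivative - (inverse y ^ Suc (Suc 0))) (at y)"
    using DERIV_inverse[of y] assms by simp
  have h1: "((\<lambda>y. poly (Pg n) (inverse y)) has_real_derivative (- (inverse y ^ Suc (Suc 0))) * poly (pderiv (Pg n)) (inverse y)) (at y)"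
    by (rule has_field_derivative_poly[OF inv])
  have h2: "((\<lambda>y. exp (- inverse y)) has_real_derivative exp (- inverse y) * (inverse y ^ Suc (Suc 0))) (at y)"
    using DERIV_chain2[OF DERIV_exp DERIV_minus[OF inv]] by simp
  show ?thesis
    by (rule DERIV_cong[OF DERIV_mult[OF h1 h2]]) (simp add: algebra_simps)
qed

lemma Dg_deriv:
  "(Dg n has_real_derivative Dg (Suc n) s) (at s)"
proof -
  consider "s > 0" | "s < 0" | "s = 0" by linarith
  then show ?thesis
  proof cases
    case 1
    show ?thesis
      apply (rule has_field_derivative_transform_within_open[OF _ open_greaterThan[of 0]])
      using Dg_deriv_pos[OF 1, of n] 1 by (auto simp: Dg_def)
  next
    case 2
    have z: "((\<lambda>y. 0) has_real_derivative 0) (at s)" by simp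
    have "(Dg n has_real_derivative 0) (at s)"
      by (rule has_field_derivative_transform_within_open[OF z open_lessThan[of 0]]) (use 2 in \<open>auto simp: Dg_def\<close>)
    then show ?thesis using 2 by (simp add: Dg_def)
  next
    case 3
    have lr: "((\<lambda>y. Dg n y / y) \<longlongrightarrow> 0) (at_right 0)"
    proof -
      have a: "((\<lambda>z. poly ([:0,1:] * Pg n) z * exp (- z)) \<longlongrightarrow> (0::real)) at_top"
        by (rule poly_exp_tendsto)
      have b: "((\<lambda>y. poly ([:0,1:] * Pg n) (inverse y) * exp (- inverse y)) \<longlongrightarrow> (0::real)) (at_right 0)"
        by (rule filterlim_compose[OF a filterlim_inverse_at_top_right])
      show ?thesis
      proof (rule Lim_transform_eventually[OF b])
        show "\<forall>\<^sub>F y in at_right 0. poly ([:0,1:] * Pg n) (inverse y) * exp (- inverse y) = Dg n y / y"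
          by (rule eventually_mono[OF eventually_at_right_less]) (auto simp: Dg_def field_simps)
      qed
    qed
    have ll: "((\<lambda>y. Dg n y / y) \<longlongrightarrow> 0) (at_left 0)"
    proof (rule Lim_transform_eventually[OF tendsto_const])
      show "\<forall>\<^sub>F y in at_left 0. 0 = Dg n y / y"
        by (rule eventually_mono[OF eventually_at_left_real[of "-1" 0, OF neg_less_0_iff_less[THEN iffD2, OF zero_less_one]]]) (auto simp: Dg_def)
    qed
    have "((\<lambda>y. (Dg n y - Dg n 0) / (y - 0)) \<longlongrightarrow> 0) (at 0)"
      using lr ll by (simp add: Dg_def filterlim_at_split)
    then show ?thesis using 3 by (simp add: has_field_derivative_iff Dg_def)
  qed
qed

lemma smooth1_gfun: "smooth1 gfun"
  unfolding smooth1_def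
proof (intro exI conjI allI)
  show "Dg 0 = gfun" by (auto simp: Dg_def gfun_def fun_eq_iff)
  fix n s show "(Dg n has_real_derivative Dg (Suc n) s) (at s)" by (rule Dg_deriv)
qed


lemma gfun_nonneg: "0 \<le> gfun y" by (simp add: gfun_def)
lemma gfun_le1: "gfun y \<le> 1" by (simp add: gfun_def)
lemma gfun_nz: "gfun y \<noteq> 0 \<longleftrightarrow> 0 < y" by (simp add: gfun_def)

definition tf :: "nat \<Rightarrow> 'a::euclidean_space \<Rightarrow> 'a \<Rightarrow> 'a \<Rightarrow> real" where
  "tf n a b x = (\<Prod>i\<in>Basis. gfun (real (Suc n) * (x \<bullet> i) + (- real (Suc n) * (a \<bullet> i))) *
       gfun ((- real (Suc n)) * (x \<bullet> i) + real (Suc n) * (b \<bullet> i)))"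

lemma tf_smooth: "smooth_fn (tf n a b)"
proof -
  have "smooth_fn (\<lambda>x::'a. \<Prod>i\<in>Basis. gfun (real (Suc n) * (x \<bullet> i) + (- real (Suc n) * (a \<bullet> i))) *
       gfun ((- real (Suc n)) * (x \<bullet> i) + real (Suc n) * (b \<bullet> i)))"
    by (rule smooth_fn_prod[OF finite_Basis], rule smooth_fn_mult; rule smooth_fn_lift[OF smooth1_gfun])
  then show ?thesis unfolding tf_def[abs_def] .
qed

lemma tf_support: "tf n a b x \<noteq> 0 \<Longrightarrow> x \<in> box a b"
proof -
  assume "tf n a b x \<noteq> 0"
  then have "\<And>i. i \<in> Basis \<Longrightarrow> 0 < real (Suc n) * (x \<bullet> i) + (- real (Suc n) * (a \<bullet> i)) \<and>
       0 < (- real (Suc n)) * (x \<bullet> i) + real (Suc n) * (b \<bullet> i)"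
    by (auto simp: tf_def gfun_nz)
  then have "\<And>i. i \<in> Basis \<Longrightarrow> 0 < real (Suc n) * (x \<bullet> i - a \<bullet> i) \<and> 0 < real (Suc n) * (b \<bullet> i - x \<bullet> i)"
    by (simp add: algebra_simps)
  then have "\<And>i. i \<in> Basis \<Longrightarrow> a \<bullet> i < x \<bullet> i \<and> x \<bullet> i < b \<bullet> i"
    by (simp add: zero_less_mult_iff)
  then show "x \<in> box a b" by (simp add: mem_box)
qed

lemma tf_test: "test_fn (tf n a b)"
proof -
  have "{x. tf n a b x \<noteq> 0} \<subseteq> box a b" using tf_support by blast
  then have "bounded {x. tf n a b x \<noteq> 0}" using bounded_box bounded_subset by blast
  then show ?thesis unfolding test_fn_def using tf_smooth by blast
qed

lemma tf_nonneg: "0 \<le> tf n a b x"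
  by (simp add: tf_def prod_nonneg gfun_nonneg)

lemma tf_le1: "tf n a b x \<le> 1"
  unfolding tf_def by (rule prod_le_1) (auto intro: mult_le_one gfun_le1 gfun_nonneg mult_nonneg_nonneg)

lemma gfun_lim:
  assumes "d > 0"
  shows "(\<lambda>n. gfun (real (Suc n) * d)) \<longlonglongrightarrow> 1"
proof -
  have "(\<lambda>n. inverse (real (Suc n)) * inverse d) \<longlonglongrightarrow> 0 * inverse d"
    by (intro tendsto_mult LIMSEQ_inverse_real_of_nat tendsto_const)
  then have "(\<lambda>n. exp (- (inverse (real (Suc n)) * inverse d))) \<longlonglongrightarrow> exp (- (0 * inverse d))"
    by (intro tendsto_exp tendsto_minus)
  moreover have "gfun (real (Suc n) * d) = exp (- (inverse (real (Suc n)) * inverse d))" for n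
    using assms by (simp add: gfun_def)
  ultimately show ?thesis by simp
qed

lemma tf_lim: "(\<lambda>n. tf n a b x) \<longlonglongrightarrow> indicator (box a b) x"
proof (cases "x \<in> box a b")
  case True
  then have ai: "\<And>i. i \<in> Basis \<Longrightarrow> a \<bullet> i < x \<bullet> i \<and> x \<bullet> i < b \<bullet> i" by (simp add: mem_box)
  have eq: "tf n a b x = (\<Prod>i\<in>Basis. gfun (real (Suc n) * (x \<bullet> i - a \<bullet> i)) * gfun (real (Suc n) * (b \<bullet> i - x \<bullet> i)))" for n
    unfolding tf_def by (simp add: algebra_simps)
  have "(\<lambda>n. \<Prod>i\<in>Basis. gfun (real (Suc n) * (x \<bullet> i - a \<bullet> i)) * gfun (real (Suc n) * (b \<bullet> i - x \<bullet> i)))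
      \<longlonglongrightarrow> (\<Prod>i\<in>(Basis::'a set). 1 * 1)"
    by (intro tendsto_prod tendsto_mult gfun_lim) (use ai in auto)
  then show ?thesis using True unfolding eq by simp
next
  case False
  then have "tf n a b x = 0" for n using tf_support by blast
  then show ?thesis using False by simp
qed

lemma smooth_fn_measurable: "smooth_fn f \<Longrightarrow> f \<in> borel_measurable borel"
proof -
  assume "smooth_fn f"
  then have "\<forall>x. f differentiable (at x)" by (rule smooth_fn_D)
  then have "continuous_on UNIV f"
    by (simp add: continuous_at_imp_continuous_on differentiable_imp_continuous_within)
  then show ?thesis by (rule borel_measurable_continuous_onI)
qed

lemma tf_measurable[measurable]: "tf n a b \<in> borel_measurable borel"
  by (rule smooth_fn_measurable[OF tf_smooth])

lemma box_lim:
  fixes h :: "'a::euclidean_space \<Rightarrow> real"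
  assumes hm[measurable]: "h \<in> borel_measurable borel"
    and hi: "integrable lborel (\<lambda>x. indicator (cbox a b) x * h x)"
  shows "(\<lambda>n. \<integral>x. h x * tf n a b x \<partial>lborel) \<longlonglongrightarrow> (\<integral>x. indicator (box a b) x * h x \<partial>lborel)"
proof (rule integral_dominated_convergence[where w = "\<lambda>x. \<bar>indicator (cbox a b) x * h x\<bar>"])
  show "integrable lborel (\<lambda>x. \<bar>indicator (cbox a b) x * h x\<bar>)" using hi by auto
  show "(\<lambda>x. indicator (box a b) x * h x) \<in> borel_measurable lborel" by measurable
  show "\<And>i. (\<lambda>x. h x * tf i a b x) \<in> borel_measurable lborel" by measurable
  show "AE x in lborel. (\<lambda>i. h x * tf i a b x) \<longlonglongrightarrow> indicator (box a b) x * h x"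
    by (intro AE_I2) (metis mult.commute tendsto_mult_left tf_lim)
  show "AE x in lborel. norm (h x * tf i a b x) \<le> \<bar>indicator (cbox a b) x * h x\<bar>" for i
  proof (intro AE_I2)
    fix x
    show "norm (h x * tf i a b x) \<le> \<bar>indicator (cbox a b) x * h x\<bar>"
    proof (cases "x \<in> box a b")
      case True
      then have "x \<in> cbox a b" using box_subset_cbox by blast
      then show ?thesis using tf_nonneg[of i a b x] tf_le1[of i a b x]
        by (simp add: abs_mult mult_left_le)
    next
      case False
      then have "tf i a b x = 0" using tf_support by blast
      then show ?thesis by simp
    qed
  qed
qed

lemma FL_box:
  fixes h :: "'a::euclidean_space \<Rightarrow> real" and l u :: 'a
  assumes hm[measurable]: "h \<in> borel_measurable borel"
    and loc: "\<And>a b. integrable lborel (\<lambda>x. indicator (cbox a b) x * h x)"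
    and zero: "\<And>a b. (\<integral>x. indicator (box a b) x * h x \<partial>lborel) = 0"
  shows "AE x in lborel. x \<in> box l u \<longrightarrow> h x = 0"
proof -
  define Q where "Q = box l u"
  have Qm[measurable]: "Q \<in> sets borel" unfolding Q_def by simp
  define M1 where "M1 = density lborel (\<lambda>x. ennreal (indicator Q x * max 0 (h x)))"
  define M2 where "M2 = density lborel (\<lambda>x. ennreal (indicator Q x * max 0 (- h x)))"
  have intg: "integrable lborel (\<lambda>x. indicator (B \<inter> Q) x * max 0 (s * h x))"
    if "B \<in> sets borel" "s = 1 \<or> s = -1" for B s
  proof (rule Bochner_Integration.integrable_bound[OF loc[of l u]])
    show "(\<lambda>x. indicator (B \<inter> Q) x * max 0 (s * h x)) \<in> borel_measurable lborel"
      using that by measurable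
    show "AE x in lborel. norm (indicator (B \<inter> Q) x * max 0 (s * h x)) \<le> norm (indicator (cbox l u) x * h x)"
    proof (intro AE_I2)
      fix x
      have "x \<in> Q \<Longrightarrow> x \<in> cbox l u" unfolding Q_def using box_subset_cbox by blast
      then show "norm (indicator (B \<inter> Q) x * max 0 (s * h x)) \<le> norm (indicator (cbox l u) x * h x)"
        using that(2) by (auto simp: indicator_def)
    qed
  qed
  have em: "emeasure (density lborel (\<lambda>x. ennreal (indicator Q x * max 0 (s * h x)))) B =
      ennreal (\<integral>x. indicator (B \<inter> Q) x * max 0 (s * h x) \<partial>lborel)"
    if "B \<in> sets borel" "s = 1 \<or> s = -1" for B s
  proof -
    have "emeasure (density lborel (\<lambda>x. ennreal (indicator Q x * max 0 (s * h x)))) B =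
        (\<integral>\<^sup>+x. ennreal (indicator Q x * max 0 (s * h x)) * indicator B x \<partial>lborel)"
      using that by (subst emeasure_density) (auto simp: nn_integral_set_ennreal)
    also have "\<dots> = (\<integral>\<^sup>+x. ennreal (indicator (B \<inter> Q) x * max 0 (s * h x)) \<partial>lborel)"
      by (intro nn_integral_cong) (auto simp: indicator_def)
    also have "\<dots> = ennreal (\<integral>x. indicator (B \<inter> Q) x * max 0 (s * h x) \<partial>lborel)"
      by (rule nn_integral_eq_integral[OF intg[OF that]]) auto
    finally show ?thesis .
  qed
  have M1eq: "M1 = density lborel (\<lambda>x. ennreal (indicator Q x * max 0 (1 * h x)))" unfolding M1_def by simp
  have M2eq: "M2 = density lborel (\<lambda>x. ennreal (indicator Q x * max 0 ((-1) * h x)))" unfolding M2_def by simp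
  have boxeq: "(\<integral>x. indicator (box a b \<inter> Q) x * max 0 (1 * h x) \<partial>lborel) =
      (\<integral>x. indicator (box a b \<inter> Q) x * max 0 ((-1) * h x) \<partial>lborel)" for a b :: 'a
  proof -
    obtain c d where cd: "box a b \<inter> Q = box c d" unfolding Q_def using box_Int_box by blast
    have "(\<integral>x. indicator (box a b \<inter> Q) x * max 0 (1 * h x) \<partial>lborel) -
      (\<integral>x. indicator (box a b \<inter> Q) x * max 0 ((-1) * h x) \<partial>lborel) =
      (\<integral>x. indicator (box a b \<inter> Q) x * max 0 (1 * h x) - indicator (box a b \<inter> Q) x * max 0 ((-1) * h x) \<partial>lborel)"
      by (rule Bochner_Integration.integral_diff[symmetric]) (use intg[of "box a b" 1] intg[of "box a b" "-1"] in auto)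
    also have "\<dots> = (\<integral>x. indicator (box c d) x * h x \<partial>lborel)"
      unfolding cd by (intro Bochner_Integration.integral_cong) (auto simp: indicator_def)
    also have "\<dots> = 0" by (rule zero)
    finally show ?thesis by simp
  qed
  have "M1 = M2"
  proof (rule measure_eqI_generator_eq[where E = "range (\<lambda>(a, b). box a b)" and \<Omega> = UNIV
        and A = "\<lambda>i. box (- real i *\<^sub>R One) (real i *\<^sub>R One)"])
    show "Int_stable (range (\<lambda>(a, b). box a b :: 'a set))"
      unfolding Int_stable_def by (auto simp: box_Int_box)
    show "range (\<lambda>(a, b). box a b :: 'a set) \<subseteq> Pow UNIV" by auto
    show "emeasure M1 X = emeasure M2 X" if "X \<in> range (\<lambda>(a, b). box a b)" for X
    proof -
      obtain a b where X: "X = box a b" using \<open>X \<in> _\<close> by auto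
      show ?thesis unfolding M1eq M2eq X
        by (subst em, simp, simp)+ (use boxeq[of a b] in simp)
    qed
    show "sets M1 = sigma_sets UNIV (range (\<lambda>(a, b). box a b))"
      unfolding M1_def by (simp add: borel_eq_box sets_measure_of)
    show "sets M2 = sigma_sets UNIV (range (\<lambda>(a, b). box a b))"
      unfolding M2_def by (simp add: borel_eq_box sets_measure_of)
    show "range (\<lambda>i. box (- real i *\<^sub>R One) (real i *\<^sub>R One)) \<subseteq> range (\<lambda>(a, b). box a b :: 'a set)"
      by auto
    show "(\<Union>i. box (- real i *\<^sub>R One) (real i *\<^sub>R One)) = (UNIV :: 'a set)"
    proof safe
      fix x :: 'a
      obtain n :: nat where n: "norm x < real n" using reals_Archimedean2 by blast
      have "\<And>i. i \<in> Basis \<Longrightarrow> \<bar>x \<bullet> i\<bar> < real n" using Basis_le_norm[of _ x] n by (meson le_less_trans)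
      then have "x \<in> box (- real n *\<^sub>R One) (real n *\<^sub>R One)"
        by (simp add: mem_box) (meson abs_less_iff minus_less_iff)
      then show "x \<in> (\<Union>i. box (- real i *\<^sub>R One) (real i *\<^sub>R One))" by blast
    qed auto
    show "emeasure M1 (box (- real i *\<^sub>R One) (real i *\<^sub>R One)) \<noteq> \<infinity>" for i
      unfolding M1eq by (subst em) auto
  qed
  have pos: "AE x in lborel. x \<in> Q \<longrightarrow> \<not> 0 < h x"
  proof -
    have "emeasure M1 {x. 0 < h x} = emeasure M2 {x. 0 < h x}" using \<open>M1 = M2\<close> by simp
    also have "\<dots> = (\<integral>\<^sup>+x. ennreal (indicator Q x * max 0 (- h x)) * indicator {x. 0 < h x} x \<partial>lborel)"
      unfolding M2_def by (subst emeasure_density) (auto simp: nn_integral_set_ennreal)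
    also have "\<dots> = 0"
      by (subst nn_integral_cong[where v="\<lambda>_. 0"]) (auto simp: indicator_def)
    finally have "(\<integral>\<^sup>+x. ennreal (indicator Q x * max 0 (h x)) * indicator {x. 0 < h x} x \<partial>lborel) = 0"
      unfolding M1_def by (subst (asm) emeasure_density) (auto simp: nn_integral_set_ennreal)
    then have "AE x in lborel. ennreal (indicator Q x * max 0 (h x)) * indicator {x. 0 < h x} x = 0"
      by (subst (asm) nn_integral_0_iff_AE) auto
    then show ?thesis
      by (rule eventually_mono) (auto simp: indicator_def)
  qed
  have neg: "AE x in lborel. x \<in> Q \<longrightarrow> \<not> h x < 0"
  proof -
    have "emeasure M2 {x. h x < 0} = emeasure M1 {x. h x < 0}" using \<open>M1 = M2\<close> by simp
    also have "\<dots> = (\<integral>\<^sup>+x. ennreal (indicator Q x * max 0 (h x)) * indicator {x. h x < 0} x \<partial>lborel)"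
      unfolding M1_def by (subst emeasure_density) (auto simp: nn_integral_set_ennreal)
    also have "\<dots> = 0"
      by (subst nn_integral_cong[where v="\<lambda>_. 0"]) (auto simp: indicator_def)
    finally have "(\<integral>\<^sup>+x. ennreal (indicator Q x * max 0 (- h x)) * indicator {x. h x < 0} x \<partial>lborel) = 0"
      unfolding M2_def by (subst (asm) emeasure_density) (auto simp: nn_integral_set_ennreal)
    then have "AE x in lborel. ennreal (indicator Q x * max 0 (- h x)) * indicator {x. h x < 0} x = 0"
      by (subst (asm) nn_integral_0_iff_AE) auto
    then show ?thesis
      by (rule eventually_mono) (auto simp: indicator_def)
  qed
  show ?thesis using pos neg unfolding Q_def[symmetric] by eventually_elim auto
qed

lemma FL:
  fixes h :: "'a::euclidean_space \<Rightarrow> real"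
  assumes hm[measurable]: "h \<in> borel_measurable borel"
    and loc: "\<And>a b. integrable lborel (\<lambda>x. indicator (cbox a b) x * h x)"
    and zero: "\<And>a b. (\<integral>x. indicator (box a b) x * h x \<partial>lborel) = 0"
  shows "AE x in lborel. h x = 0"
proof -
  have "AE x in lborel. \<forall>n::nat. x \<in> box (- real n *\<^sub>R One) (real n *\<^sub>R One) \<longrightarrow> h x = 0"
    unfolding AE_all_countable using FL_box[OF hm loc zero] by blast
  then show ?thesis
  proof (rule eventually_mono)
    fix x :: 'a
    assume H: "\<forall>n::nat. x \<in> box (- real n *\<^sub>R One) (real n *\<^sub>R One) \<longrightarrow> h x = 0"
    obtain n :: nat where n: "norm x < real n" using reals_Archimedean2 by blast
    have "\<And>i. i \<in> Basis \<Longrightarrow> \<bar>x \<bullet> i\<bar> < real n" using Basis_le_norm[of _ x] n by (meson le_less_trans)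
    then have "x \<in> box (- real n *\<^sub>R One) (real n *\<^sub>R One)"
      by (simp add: mem_box) (meson abs_less_iff minus_less_iff)
    then show "h x = 0" using H by blast
  qed
qed

lemma lborel_scale:
  assumes c: "(c::real) \<noteq> 0"
  shows "(lborel::'a::euclidean_space measure) = density (distr lborel borel (\<lambda>x. c *\<^sub>R x)) (\<lambda>_. ennreal (\<bar>c\<bar> ^ DIM('a)))"
  using lborel_affine[OF c, of 0] by simp

lemma integrable_scaleR_iff':
  fixes f :: "'a \<Rightarrow> 'b::{banach, second_countable_topology}"
  assumes "K \<noteq> 0"
  shows "integrable M (\<lambda>x. K *\<^sub>R f x) \<longleftrightarrow> integrable M f"
proof
  assume "integrable M (\<lambda>x. K *\<^sub>R f x)"
  then have "integrable M (\<lambda>x. (1/K) *\<^sub>R (K *\<^sub>R f x))" by (rule integrable_scaleR_right)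
  then show "integrable M f" using assms by simp
qed (rule integrable_scaleR_right)

lemma integrable_scale_iff:
  fixes f :: "'a::euclidean_space \<Rightarrow> 'b::{banach, second_countable_topology}"
  assumes f[measurable]: "f \<in> borel_measurable borel" and c: "c \<noteq> 0"
  shows "integrable lborel (\<lambda>x. f (c *\<^sub>R x)) \<longleftrightarrow> integrable lborel f"
proof -
  have "integrable lborel f \<longleftrightarrow> integrable (density (distr lborel borel (\<lambda>x. c *\<^sub>R x)) (\<lambda>_. ennreal (\<bar>c\<bar> ^ DIM('a)))) f"
    by (subst (1) lborel_scale[OF c, where 'a='a]) (rule refl)
  also have "\<dots> \<longleftrightarrow> integrable (distr lborel borel (\<lambda>x. c *\<^sub>R x)) (\<lambda>x. (\<bar>c\<bar> ^ DIM('a)) *\<^sub>R f x)"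
    by (rule integrable_density) auto
  also have "\<dots> \<longleftrightarrow> integrable lborel (\<lambda>x. (\<bar>c\<bar> ^ DIM('a)) *\<^sub>R f (c *\<^sub>R x))"
    by (rule integrable_distr_eq) auto
  also have "\<dots> \<longleftrightarrow> integrable lborel (\<lambda>x. f (c *\<^sub>R x))"
    by (rule integrable_scaleR_iff') (use c in simp)
  finally show ?thesis ..
qed

lemma integral_scale:
  fixes f :: "'a::euclidean_space \<Rightarrow> 'b::{banach, second_countable_topology}"
  assumes f[measurable]: "f \<in> borel_measurable borel" and c: "c \<noteq> 0"
  shows "integral\<^sup>L lborel f = (\<bar>c\<bar> ^ DIM('a)) *\<^sub>R integral\<^sup>L lborel (\<lambda>x. f (c *\<^sub>R x))"
proof -
  have "integral\<^sup>L lborel f = integral\<^sup>L (density (distr lborel borel (\<lambda>x. c *\<^sub>R x)) (\<lambda>_. ennreal (\<bar>c\<bar> ^ DIM('a)))) f"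
    by (subst (1) lborel_scale[OF c, where 'a='a]) (rule refl)
  also have "\<dots> = integral\<^sup>L (distr lborel borel (\<lambda>x. c *\<^sub>R x)) (\<lambda>x. (\<bar>c\<bar> ^ DIM('a)) *\<^sub>R f x)"
    by (rule integral_density) auto
  also have "\<dots> = integral\<^sup>L lborel (\<lambda>x. (\<bar>c\<bar> ^ DIM('a)) *\<^sub>R f (c *\<^sub>R x))"
    by (rule integral_distr) auto
  also have "\<dots> = (\<bar>c\<bar> ^ DIM('a)) *\<^sub>R integral\<^sup>L lborel (\<lambda>x. f (c *\<^sub>R x))"
    by simp
  finally show ?thesis .
qed

lemma integral_scale_real:
  fixes f :: "'a::euclidean_space \<Rightarrow> real"
  assumes f[measurable]: "f \<in> borel_measurable borel" and c: "c > 0"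
  shows "integral\<^sup>L lborel (\<lambda>x. f (c *\<^sub>R x)) = integral\<^sup>L lborel f / c ^ DIM('a)"
  using integral_scale[OF f, of c] c by simp

lemma DIM3: "DIM(R3) = 3" by simp

lemma frechet_scale:
  assumes "\<forall>x. \<phi> differentiable (at x)"
  shows "frechet_derivative (\<lambda>y. \<phi> (c *\<^sub>R y)) (at y) v = c * frechet_derivative \<phi> (at (c *\<^sub>R y)) v"
proof -
  have dp: "\<And>y. (\<phi> has_derivative frechet_derivative \<phi> (at y)) (at y)"
    using assms frechet_derivative_works by blast
  have d: "((\<lambda>y. \<phi> (c *\<^sub>R y)) has_derivative (\<lambda>v. frechet_derivative \<phi> (at (c *\<^sub>R y)) (c *\<^sub>R v))) (at y)"
    by (rule has_derivative_compose[where f = "\<lambda>x. c *\<^sub>R x" and g = \<phi>, unfolded o_def])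
       (auto intro!: derivative_eq_intros dp)
  have "frechet_derivative (\<lambda>y. \<phi> (c *\<^sub>R y)) (at y) v = frechet_derivative \<phi> (at (c *\<^sub>R y)) (c *\<^sub>R v)"
    by (simp add: frechet_derivative_at[OF d, symmetric])
  also have "\<dots> = c * frechet_derivative \<phi> (at (c *\<^sub>R y)) v"
    using linear_frechet_derivative[of \<phi> "at (c *\<^sub>R y)"] assms by (simp add: linear_scale)
  finally show ?thesis .
qed

lemma smooth_fn_frechet_measurable[measurable]:
  "smooth_fn \<phi> \<Longrightarrow> (\<lambda>x. frechet_derivative \<phi> (at x) v) \<in> borel_measurable borel"
  by (rule smooth_fn_measurable[OF smooth_fn_D(2)])

lemma scale_image_indicator:
  fixes K :: "'a::real_vector set"
  assumes "t \<noteq> 0"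
  shows "indicator ((\<lambda>x. t *\<^sub>R x) ` K) (t *\<^sub>R x) = (indicator K x :: real)"
  using assms by (auto simp: indicator_def image_iff)

lemma set_integrable_scale:
  fixes f :: "R3 \<Rightarrow> 'b::{banach, second_countable_topology}"
  assumes t: "t > 0" and K: "compact K" and fm[measurable]: "f \<in> borel_measurable borel"
    and si: "set_integrable lborel ((\<lambda>x. t *\<^sub>R x) ` K) f"
  shows "set_integrable lborel K (\<lambda>x. f (t *\<^sub>R x))"
proof -
  have cK: "compact ((\<lambda>x. t *\<^sub>R x) ` K)" by (rule compact_scaling[OF K])
  have Km[measurable]: "((\<lambda>x. t *\<^sub>R x) ` K) \<in> sets borel" by (simp add: borel_closed compact_imp_closed cK)
  have "integrable lborel (\<lambda>y. indicator ((\<lambda>x. t *\<^sub>R x) ` K) y *\<^sub>R f y)"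
    using si unfolding set_integrable_def .
  then have "integrable lborel (\<lambda>x. indicator ((\<lambda>x. t *\<^sub>R x) ` K) (t *\<^sub>R x) *\<^sub>R f (t *\<^sub>R x))"
    by (subst integrable_scale_iff[where c = t]) (use t in auto)
  then show ?thesis unfolding set_integrable_def scale_image_indicator[of t, OF less_imp_neq[OF t, symmetric]]
    .
qed

lemma weak_grad_scale:
  assumes t: "t > 0" and wg: "weak_grad u g"
    and um[measurable]: "u \<in> borel_measurable borel" and gm[measurable]: "g \<in> borel_measurable borel"
  shows "weak_grad (\<lambda>x. t\<^sup>2 * u (t *\<^sub>R x)) (\<lambda>x. t ^ 3 *\<^sub>R g (t *\<^sub>R x))"
  unfolding weak_grad_def
proof (intro conjI allI impI ballI)
  fix K :: "R3 set" assume K: "compact K"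
  have cK: "compact ((\<lambda>x. t *\<^sub>R x) ` K)" by (rule compact_scaling[OF K])
  have "set_integrable lborel K (\<lambda>x. u (t *\<^sub>R x))"
    by (rule set_integrable_scale[OF t K um]) (use wg cK in \<open>auto simp: weak_grad_def\<close>)
  then have "integrable lborel (\<lambda>x. t\<^sup>2 * (indicator K x *\<^sub>R u (t *\<^sub>R x)))"
    unfolding set_integrable_def by (rule integrable_mult_right)
  then show "set_integrable lborel K (\<lambda>x. t\<^sup>2 * u (t *\<^sub>R x))"
    unfolding set_integrable_def by (simp add: ac_simps)
  have "set_integrable lborel K (\<lambda>x. g (t *\<^sub>R x))"
    by (rule set_integrable_scale[OF t K gm]) (use wg cK in \<open>auto simp: weak_grad_def\<close>)
  then have "integrable lborel (\<lambda>x. t ^ 3 *\<^sub>R (indicator K x *\<^sub>R g (t *\<^sub>R x)))"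
    unfolding set_integrable_def by (rule integrable_scaleR_right)
  then show "set_integrable lborel K (\<lambda>x. t ^ 3 *\<^sub>R g (t *\<^sub>R x))"
    unfolding set_integrable_def by (simp add: ac_simps)
next
  fix \<phi> :: "R3 \<Rightarrow> real" and i :: R3
  assume tp: "test_fn \<phi>" and i: "i \<in> Basis"
  have sp: "smooth_fn \<phi>" using tp by (simp add: test_fn_def)
  have dphi: "\<forall>x. \<phi> differentiable (at x)" by (rule smooth_fn_D(1)[OF sp])
  define \<psi> where "\<psi> = (\<lambda>y. \<phi> ((1/t) *\<^sub>R y))"
  have sps: "smooth_fn \<psi>" unfolding \<psi>_def by (rule smooth_fn_scale[OF sp])
  have "{y. \<psi> y \<noteq> 0} \<subseteq> (\<lambda>x. t *\<^sub>R x) ` {x. \<phi> x \<noteq> 0}"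
  proof
    fix y assume "y \<in> {y. \<psi> y \<noteq> 0}"
    then have "(1/t) *\<^sub>R y \<in> {x. \<phi> x \<noteq> 0}" by (simp add: \<psi>_def)
    moreover have "y = t *\<^sub>R ((1/t) *\<^sub>R y)" using t by simp
    ultimately show "y \<in> (\<lambda>x. t *\<^sub>R x) ` {x. \<phi> x \<noteq> 0}" by blast
  qed
  moreover have "bounded ((\<lambda>x. t *\<^sub>R x) ` {x. \<phi> x \<noteq> 0})"
    using tp by (simp add: test_fn_def bounded_scaling)
  ultimately have "bounded {y. \<psi> y \<noteq> 0}" using bounded_subset by blast
  then have tps: "test_fn \<psi>" using sps by (simp add: test_fn_def)
  have sm_psi[measurable]: "\<psi> \<in> borel_measurable borel" by (rule smooth_fn_measurable[OF sps])
  have sm_phi[measurable]: "\<phi> \<in> borel_measurable borel" by (rule smooth_fn_measurable[OF sp])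
  have dpsi: "frechet_derivative \<psi> (at y) i = (1/t) * frechet_derivative \<phi> (at ((1/t) *\<^sub>R y)) i" for y
    unfolding \<psi>_def by (rule frechet_scale[OF dphi])
  have hyp: "(\<integral>y. u y * frechet_derivative \<psi> (at y) i \<partial>lborel) = - (\<integral>y. (g y \<bullet> i) * \<psi> y \<partial>lborel)"
    using wg tps i unfolding weak_grad_def by blast
  have L: "(\<integral>y. u y * frechet_derivative \<psi> (at y) i \<partial>lborel) =
      (\<integral>x. t\<^sup>2 * u (t *\<^sub>R x) * frechet_derivative \<phi> (at x) i \<partial>lborel)"
  proof -
    have m: "(\<lambda>y. u y * frechet_derivative \<psi> (at y) i) \<in> borel_measurable borel"
      using smooth_fn_frechet_measurable[OF sps] by measurable
    have "(\<integral>y. u y * frechet_derivative \<psi> (at y) i \<partial>lborel) =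
        t ^ 3 * (\<integral>x. u (t *\<^sub>R x) * frechet_derivative \<psi> (at (t *\<^sub>R x)) i \<partial>lborel)"
      using integral_scale[OF m, of t] t by simp
    also have "\<dots> = t ^ 3 * (\<integral>x. (1/t) * (u (t *\<^sub>R x) * frechet_derivative \<phi> (at x) i) \<partial>lborel)"
      using t by (simp add: dpsi ac_simps)
    also have "\<dots> = (\<integral>x. t\<^sup>2 * u (t *\<^sub>R x) * frechet_derivative \<phi> (at x) i \<partial>lborel)"
      using t by (simp add: power2_eq_square power3_eq_cube ac_simps)
    finally show ?thesis .
  qed
  have R: "(\<integral>y. (g y \<bullet> i) * \<psi> y \<partial>lborel) = (\<integral>x. ((t ^ 3 *\<^sub>R g (t *\<^sub>R x)) \<bullet> i) * \<phi> x \<partial>lborel)"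
  proof -
    have m: "(\<lambda>y. (g y \<bullet> i) * \<psi> y) \<in> borel_measurable borel" by measurable
    have "(\<integral>y. (g y \<bullet> i) * \<psi> y \<partial>lborel) = t ^ 3 * (\<integral>x. (g (t *\<^sub>R x) \<bullet> i) * \<psi> (t *\<^sub>R x) \<partial>lborel)"
      using integral_scale[OF m, of t] t by simp
    also have "\<dots> = t ^ 3 * (\<integral>x. (g (t *\<^sub>R x) \<bullet> i) * \<phi> x \<partial>lborel)"
      using t by (simp add: \<psi>_def)
    also have "\<dots> = (\<integral>x. t ^ 3 * ((g (t *\<^sub>R x) \<bullet> i) * \<phi> x) \<partial>lborel)"
      by (rule integral_mult_right_zero[symmetric])
    also have "\<dots> = (\<integral>x. ((t ^ 3 *\<^sub>R g (t *\<^sub>R x)) \<bullet> i) * \<phi> x \<partial>lborel)"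
      by (simp add: ac_simps)
    finally show ?thesis .
  qed
  show "(\<integral>x. t\<^sup>2 * u (t *\<^sub>R x) * frechet_derivative \<phi> (at x) i \<partial>lborel) =
      - (\<integral>x. ((t ^ 3 *\<^sub>R g (t *\<^sub>R x)) \<bullet> i) * \<phi> x \<partial>lborel)"
    using hyp L R by simp
qed

lemma loc_comp:
  assumes w: "weak_grad u g" 
  shows "integrable lborel (\<lambda>x. indicator (cbox a b) x * (g x \<bullet> i))"
proof -
  have "set_integrable lborel (cbox a b) g" using w by (simp add: weak_grad_def)
  then have "integrable lborel (\<lambda>x. (indicator (cbox a b) x *\<^sub>R g x) \<bullet> i)"
    unfolding set_integrable_def by (rule integrable_inner_left)
  then show ?thesis by simp
qed

lemma tf_integrable:
  fixes g :: "R3 \<Rightarrow> R3"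
  assumes w: "weak_grad u g" and gm[measurable]: "g \<in> borel_measurable borel"
  shows "integrable lborel (\<lambda>x. (g x \<bullet> i) * tf n a b x)"
proof (rule Bochner_Integration.integrable_bound[OF loc_comp[OF w, of a b i]])
  show "(\<lambda>x. (g x \<bullet> i) * tf n a b x) \<in> borel_measurable lborel" by measurable
  show "AE x in lborel. norm ((g x \<bullet> i) * tf n a b x) \<le> norm (indicator (cbox a b) x * (g x \<bullet> i))"
  proof (intro AE_I2)
    fix x
    show "norm ((g x \<bullet> i) * tf n a b x) \<le> norm (indicator (cbox a b) x * (g x \<bullet> i))"
    proof (cases "x \<in> box a b")
      case True
      then have "x \<in> cbox a b" using box_subset_cbox by blast
      then show ?thesis using tf_nonneg[of n a b x] tf_le1[of n a b x]
        by (simp add: abs_mult mult_left_le)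
    next
      case False
      then have "tf n a b x = 0" using tf_support by blast
      then show ?thesis by simp
    qed
  qed
qed

lemma weak_grad_unique:
  assumes w1: "weak_grad u g1" and w2: "weak_grad u g2"
    and m1[measurable]: "g1 \<in> borel_measurable borel" and m2[measurable]: "g2 \<in> borel_measurable borel"
  shows "AE x in lborel. g1 x = g2 x"
proof -
  have comp: "AE x in lborel. (g1 x - g2 x) \<bullet> i = 0" if i: "i \<in> Basis" for i
  proof (rule FL)
    show "(\<lambda>x. (g1 x - g2 x) \<bullet> i) \<in> borel_measurable borel" by measurable
    show "integrable lborel (\<lambda>x. indicator (cbox a b) x * ((g1 x - g2 x) \<bullet> i))" for a b
    proof -
      have "integrable lborel (\<lambda>x. indicator (cbox a b) x * (g1 x \<bullet> i) - indicator (cbox a b) x * (g2 x \<bullet> i))"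
        by (intro Bochner_Integration.integrable_diff loc_comp[OF w1] loc_comp[OF w2])
      then show ?thesis by (simp add: inner_diff_left right_diff_distrib)
    qed
    show "(\<integral>x. indicator (box a b) x * ((g1 x - g2 x) \<bullet> i) \<partial>lborel) = 0" for a b :: R3
    proof -
      have eqn: "(\<integral>x. ((g1 x - g2 x) \<bullet> i) * tf n a b x \<partial>lborel) = 0" for n
      proof -
        have "(\<integral>x. u x * frechet_derivative (tf n a b) (at x) i \<partial>lborel) = - (\<integral>x. (g1 x \<bullet> i) * tf n a b x \<partial>lborel)"
          using w1 tf_test[of n a b] i unfolding weak_grad_def by blast
        moreover have "(\<integral>x. u x * frechet_derivative (tf n a b) (at x) i \<partial>lborel) = - (\<integral>x. (g2 x \<bullet> i) * tf n a b x \<partial>lborel)"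
          using w2 tf_test[of n a b] i unfolding weak_grad_def by blast
        moreover have "(\<integral>x. ((g1 x - g2 x) \<bullet> i) * tf n a b x \<partial>lborel) =
            (\<integral>x. (g1 x \<bullet> i) * tf n a b x - (g2 x \<bullet> i) * tf n a b x \<partial>lborel)"
          by (simp add: inner_diff_left left_diff_distrib)
        moreover have "\<dots> = (\<integral>x. (g1 x \<bullet> i) * tf n a b x \<partial>lborel) - (\<integral>x. (g2 x \<bullet> i) * tf n a b x \<partial>lborel)"
          by (rule Bochner_Integration.integral_diff[OF tf_integrable[OF w1 m1] tf_integrable[OF w2 m2]])
        ultimately show ?thesis by simp
      qed
      have "(\<lambda>n. \<integral>x. ((g1 x - g2 x) \<bullet> i) * tf n a b x \<partial>lborel) \<longlonglongrightarrow>
          (\<integral>x. indicator (box a b) x * ((g1 x - g2 x) \<bullet> i) \<partial>lborel)"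
      proof (rule box_lim)
        show "(\<lambda>x. (g1 x - g2 x) \<bullet> i) \<in> borel_measurable borel" by measurable
        have "integrable lborel (\<lambda>x. indicator (cbox a b) x * (g1 x \<bullet> i) - indicator (cbox a b) x * (g2 x \<bullet> i))"
          by (intro Bochner_Integration.integrable_diff loc_comp[OF w1] loc_comp[OF w2])
        then show "integrable lborel (\<lambda>x. indicator (cbox a b) x * ((g1 x - g2 x) \<bullet> i))"
          by (simp add: inner_diff_left right_diff_distrib)
      qed
      then have "(\<lambda>n. 0::real) \<longlonglongrightarrow> (\<integral>x. indicator (box a b) x * ((g1 x - g2 x) \<bullet> i) \<partial>lborel)"
        unfolding eqn .
      from LIMSEQ_unique[OF this tendsto_const] show ?thesis .
    qed
  qed
  have "AE x in lborel. \<forall>i\<in>Basis. (g1 x - g2 x) \<bullet> i = 0"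
    by (rule AE_finite_allI[OF finite_Basis]) (rule comp)
  then show ?thesis
  proof (rule eventually_mono)
    fix x assume "\<forall>i\<in>Basis. (g1 x - g2 x) \<bullet> i = 0"
    then have "g1 x - g2 x = 0" by (simp add: euclidean_all_zero_iff)
    then show "g1 x = g2 x" by simp
  qed
qed

lemma grad_props:
  assumes "D12 u"
  shows "weak_grad u (grad u) \<and> grad u \<in> borel_measurable lborel \<and> integrable lborel (\<lambda>x. (norm (grad u x))\<^sup>2)"
proof -
  have "\<exists>g. weak_grad u g \<and> g \<in> borel_measurable lborel \<and> integrable lborel (\<lambda>x. (norm (g x))\<^sup>2)"
    using assms by (simp add: D12_def)
  then show ?thesis unfolding grad_def by (rule someI_ex)
qed

lemma D12_scale:
  assumes t: "t > 0" and D: "D12 u"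
  shows "D12 (\<lambda>x. t\<^sup>2 * u (t *\<^sub>R x)) \<and> grad_sq (\<lambda>x. t\<^sup>2 * u (t *\<^sub>R x)) = t ^ 3 * grad_sq u"
proof -
  define g where "g = grad u"
  have um[measurable]: "u \<in> borel_measurable borel" using D by (simp add: D12_def)
  have u6: "integrable lborel (\<lambda>x. \<bar>u x\<bar> ^ 6)" using D by (simp add: D12_def)
  have gp: "weak_grad u g" "g \<in> borel_measurable borel" "integrable lborel (\<lambda>x. (norm (g x))\<^sup>2)"
    using grad_props[OF D] unfolding g_def by auto
  have gm[measurable]: "g \<in> borel_measurable borel" by (rule gp(2))
  define ut where "ut = (\<lambda>x. t\<^sup>2 * u (t *\<^sub>R x))"
  define gt where "gt = (\<lambda>x. t ^ 3 *\<^sub>R g (t *\<^sub>R x))"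
  have wt: "weak_grad ut gt" unfolding ut_def gt_def by (rule weak_grad_scale[OF t gp(1) um gm])
  have utm[measurable]: "ut \<in> borel_measurable borel" unfolding ut_def by measurable
  have gtm[measurable]: "gt \<in> borel_measurable borel" unfolding gt_def by measurable
  have "integrable lborel (\<lambda>x. \<bar>u (t *\<^sub>R x)\<bar> ^ 6)"
    by (subst integrable_scale_iff[where f = "\<lambda>x. \<bar>u x\<bar> ^ 6"]) (use t u6 in auto)
  then have "integrable lborel (\<lambda>x. (t\<^sup>2) ^ 6 * \<bar>u (t *\<^sub>R x)\<bar> ^ 6)" by simp
  then have ut6: "integrable lborel (\<lambda>x. \<bar>ut x\<bar> ^ 6)"
    unfolding ut_def by (simp add: abs_mult power_mult_distrib)
  have gsc: "integrable lborel (\<lambda>x. (norm (g (t *\<^sub>R x)))\<^sup>2)"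
    by (subst integrable_scale_iff[where f = "\<lambda>x. (norm (g x))\<^sup>2"]) (use t gp(3) in auto)
  then have "integrable lborel (\<lambda>x. (t ^ 3) ^ 2 * (norm (g (t *\<^sub>R x)))\<^sup>2)" by simp
  then have gt2: "integrable lborel (\<lambda>x. (norm (gt x))\<^sup>2)"
    unfolding gt_def using t by (simp add: power_mult_distrib)
  have Dt: "D12 ut" unfolding D12_def using utm ut6 wt gtm gt2 by auto
  have Gp: "weak_grad ut (grad ut)" "grad ut \<in> borel_measurable borel"
    using grad_props[OF Dt] by auto
  have ae: "AE x in lborel. grad ut x = gt x"
    by (rule weak_grad_unique[OF Gp(1) wt Gp(2) gtm])
  have "grad_sq ut = (\<integral>x. (norm (gt x))\<^sup>2 \<partial>lborel)"
    unfolding grad_sq_def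
  proof (rule integral_cong_AE)
    show "AE x in lborel. (norm (grad ut x))\<^sup>2 = (norm (gt x))\<^sup>2"
      using ae by (rule eventually_mono) simp
  qed (use Gp(2) in auto)
  also have "\<dots> = (\<integral>x. (t ^ 3) ^ 2 * (norm (g (t *\<^sub>R x)))\<^sup>2 \<partial>lborel)"
    unfolding gt_def using t by (simp add: power_mult_distrib)
  also have "\<dots> = (t ^ 3) ^ 2 * (\<integral>x. (norm (g (t *\<^sub>R x)))\<^sup>2 \<partial>lborel)" by simp
  also have "(\<integral>x. (norm (g (t *\<^sub>R x)))\<^sup>2 \<partial>lborel) = (\<integral>x. (norm (g x))\<^sup>2 \<partial>lborel) / t ^ 3"
    using integral_scale_real[where f = "\<lambda>x. (norm (g x))\<^sup>2", of t] t by simp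
  also have "(t ^ 3) ^ 2 * ((\<integral>x. (norm (g x))\<^sup>2 \<partial>lborel) / t ^ 3) = t ^ 3 * grad_sq u"
  proof -
    have e: "t ^ 3 * (A / t ^ 3) = A" for A using t by simp
    have "\<And>A. (t ^ 3) ^ 2 * (A / t ^ 3) = t ^ 3 * A" by (simp only: power2_eq_square mult.assoc e)
    then show ?thesis unfolding grad_sq_def g_def by blast
  qed
  finally show ?thesis using Dt unfolding ut_def by simp
qed

lemma powr_tangent:
  fixes s \<alpha> :: real
  assumes s: "s > 0" and al: "\<alpha> \<ge> 1"
  shows "s powr \<alpha> - 1 \<ge> \<alpha> * (s - 1)"
proof -
  have d: "((\<lambda>x. x powr \<alpha>) has_real_derivative \<alpha> * 1 powr (\<alpha> - 1)) (at 1 within {0<..})"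
    by (rule has_field_derivative_at_within[OF has_real_derivative_powr]) simp
  have "s powr \<alpha> - 1 powr \<alpha> \<ge> (\<alpha> * 1 powr (\<alpha> - 1)) * (s - 1)"
    by (rule convex_on_imp_above_tangent[OF powr_convex[OF al] _ _ _ d])
       (use s in \<open>auto simp: convex_connected interior_open\<close>)
  then show ?thesis by simp
qed

lemma B_ineq:
  fixes t p :: real
  assumes t: "t > 0" and p: "p \<ge> 3"
  shows "(t\<^sup>2) powr p / t ^ 3 - 1 - (2 * p - 3) / 3 * (t ^ 3 - 1) \<ge> 0"
proof -
  have e0: "t\<^sup>2 = t powr 2" using powr_realpow[of t 2] t by simp
  have e1: "(t\<^sup>2) powr p = t powr (2 * p)"
    by (simp only: e0 powr_powr)
  have e2: "t ^ 3 = t powr 3"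
    using t powr_realpow[of t 3] by simp
  have "(t\<^sup>2) powr p / t ^ 3 = t powr (2 * p - 3)"
    unfolding e1 e2 by (simp add: powr_diff)
  also have "\<dots> = (t powr 3) powr ((2 * p - 3) / 3)"
    by (subst powr_powr, rule arg_cong[where f="\<lambda>x. t powr x"]) simp
  finally have e: "(t\<^sup>2) powr p / t ^ 3 = (t ^ 3) powr ((2 * p - 3) / 3)" unfolding e2 .
  have "(t ^ 3) powr ((2 * p - 3) / 3) - 1 \<ge> (2 * p - 3) / 3 * (t ^ 3 - 1)"
    by (rule powr_tangent) (use t p in auto)
  then show ?thesis unfolding e by simp
qed

lemma kern_pt:
  fixes a t r :: real
  assumes a: "a > 0" and t: "t > 0" and r: "r > 0"
  shows "(1 - exp (- r / a)) / r - t ^ 3 * ((1 - exp (- r / (t * a))) / r)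
     - (1 - t ^ 3) * ((1 - exp (- r / a) - r / (3 * a) * exp (- r / a)) / r) \<ge> 0"
proof -
  define s where "s = r / a"
  have s: "s > 0" using a r by (simp add: s_def)
  define E where "E = exp (- s)"
  define F where "F = exp (- s / t)"
  have E: "E > 0" by (simp add: E_def)
  have rs: "r / (t * a) = s / t" by (simp add: s_def)
  have F: "F \<ge> E * (1 + (s - s / t))"
  proof -
    have "F = E * exp (s - s / t)" by (simp add: E_def F_def exp_add[symmetric])
    moreover have "exp (s - s / t) \<ge> 1 + (s - s / t)" by simp
    ultimately show ?thesis using E by (simp add: mult_left_mono)
  qed
  have poly: "(t - 1)\<^sup>2 * (2 * t + 1) \<ge> 0" using t by simp
  have key: "t ^ 3 * F + s / 3 * E - t ^ 3 * E - t ^ 3 * (s / 3) * E \<ge> 0"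
  proof -
    have "t ^ 3 * F \<ge> t ^ 3 * (E * (1 + (s - s / t)))" using F t by (simp add: mult_left_mono)
    moreover have "t ^ 3 * (E * (1 + (s - s / t))) + s / 3 * E - t ^ 3 * E - t ^ 3 * (s / 3) * E
        = E * s / 3 * ((t - 1)\<^sup>2 * (2 * t + 1))"
      using t by (simp add: field_simps power2_eq_square power3_eq_cube)
    moreover have "E * s / 3 * ((t - 1)\<^sup>2 * (2 * t + 1)) \<ge> 0" using E s poly by simp
    ultimately show ?thesis by linarith
  qed
  have "(1 - exp (- r / a)) / r - t ^ 3 * ((1 - exp (- r / (t * a))) / r)
     - (1 - t ^ 3) * ((1 - exp (- r / a) - r / (3 * a) * exp (- r / a)) / r)
     = (t ^ 3 * F + s / 3 * E - t ^ 3 * E - t ^ 3 * (s / 3) * E) / r"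
    using r a t unfolding E_def F_def s_def by (simp add: field_simps)
  also have "\<dots> \<ge> 0" using key r by simp
  finally show ?thesis .
qed

lemma Kern_scale:
  assumes a: "a > 0" and t: "t > 0"
  shows "Kern a ((1/t) *\<^sub>R d) = t * Kern (t * a) d"
proof (cases "norm d = 0")
  case True then show ?thesis by (simp add: Kern_def)
next
  case False
  then show ?thesis using a t by (simp add: Kern_def field_simps)
qed

lemma Kern_nonneg: "a > 0 \<Longrightarrow> Kern a d \<ge> 0"
  by (simp add: Kern_def divide_nonneg_nonneg)

lemma KernJ_nonneg: 
  assumes a: "a > 0" shows "KernJ a d \<ge> 0"
proof -
  define s where "s = norm d / a"
  have s: "s \<ge> 0" using a by (simp add: s_def)
  have "exp s \<ge> 1 + s" by simp
  then have "1 \<ge> (1 + s) * exp (- s)" by (simp add: exp_minus field_simps)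
  moreover have "(1 + s) * exp (- s) \<ge> (1 + s / 3) * exp (- s)"
    using s by (intro mult_right_mono) auto
  ultimately have "1 - exp (- s) - s / 3 * exp (- s) \<ge> 0" by (simp add: algebra_simps)
  moreover have "norm d / (3 * a) = s / 3" by (simp add: s_def)
  ultimately show ?thesis unfolding KernJ_def
    by (intro divide_nonneg_nonneg) (auto simp: s_def)
qed

lemma KernJ_le: 
  assumes a: "a > 0" shows "KernJ a d \<le> Kern a d"
  unfolding KernJ_def Kern_def using a by (intro divide_right_mono) auto

lemma kern_comb:
  assumes a: "a > 0" and t: "t > 0"
  shows "Kern a d - t ^ 3 * Kern (t * a) d - (1 - t ^ 3) * KernJ a d \<ge> 0"
proof (cases "norm d = 0")
  case True then show ?thesis by (simp add: Kern_def KernJ_def)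
next
  case False
  then have "norm d > 0" by simp
  from kern_pt[OF a t this] show ?thesis
    by (simp add: Kern_def KernJ_def)
qed

lemma Kern_meas[measurable]: "(\<lambda>z. Kern a z) \<in> borel_measurable borel"
  unfolding Kern_def by measurable
lemma KernJ_meas[measurable]: "(\<lambda>z. KernJ a z) \<in> borel_measurable borel"
  unfolding KernJ_def by measurable

lemma Lp_scale:
  assumes t: "t > 0" and um[measurable]: "u \<in> borel_measurable borel"
  shows "Lp_pow p (\<lambda>x. t\<^sup>2 * u (t *\<^sub>R x)) = (t\<^sup>2) powr p * (Lp_pow p u / t ^ 3)"
proof -
  have "Lp_pow p (\<lambda>x. t\<^sup>2 * u (t *\<^sub>R x)) = (\<integral>x. (t\<^sup>2) powr p * \<bar>u (t *\<^sub>R x)\<bar> powr p \<partial>lborel)"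
    unfolding Lp_pow_def by (simp add: abs_mult powr_mult)
  also have "\<dots> = (t\<^sup>2) powr p * (\<integral>x. \<bar>u (t *\<^sub>R x)\<bar> powr p \<partial>lborel)" by simp
  also have "(\<integral>x. \<bar>u (t *\<^sub>R x)\<bar> powr p \<partial>lborel) = Lp_pow p u / t ^ 3"
    unfolding Lp_pow_def using integral_scale_real[where f = "\<lambda>x. \<bar>u x\<bar> powr p", of t] t by simp
  finally show ?thesis .
qed

lemma V_scale:
  assumes a: "a > 0" and t: "t > 0" and um[measurable]: "u \<in> borel_measurable borel"
  shows "Vpot a (\<lambda>x. (t\<^sup>2 * u (t *\<^sub>R x))\<^sup>2) (\<lambda>x. (t\<^sup>2 * u (t *\<^sub>R x))\<^sup>2) =
    t ^ 3 * (\<integral>z. Kern (t * a) (fst z - snd z) * (u (fst z))\<^sup>2 * (u (snd z))\<^sup>2 \<partial>lborel)"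
proof -
  define H where "H = (\<lambda>w::R3 \<times> R3. Kern a ((1/t) *\<^sub>R (fst w - snd w)) * (t\<^sup>2 * u (fst w))\<^sup>2 * (t\<^sup>2 * u (snd w))\<^sup>2)"
  have "H \<in> borel_measurable (borel \<Otimes>\<^sub>M borel)" unfolding H_def by measurable
  then have Hm: "H \<in> borel_measurable borel" by (simp add: borel_prod)
  have "Vpot a (\<lambda>x. (t\<^sup>2 * u (t *\<^sub>R x))\<^sup>2) (\<lambda>x. (t\<^sup>2 * u (t *\<^sub>R x))\<^sup>2) = (\<integral>z. H (t *\<^sub>R z) \<partial>lborel)"
    unfolding Vpot_def lborel_prod H_def using t by (simp add: scaleR_diff_right[symmetric])
  also have "\<dots> = integral\<^sup>L lborel H / t ^ 6"
    using integral_scale_real[OF Hm t] by simp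
  also have "integral\<^sup>L lborel H = t ^ 9 * (\<integral>z. Kern (t * a) (fst z - snd z) * (u (fst z))\<^sup>2 * (u (snd z))\<^sup>2 \<partial>lborel)"
  proof -
    have "\<And>w. H w = t ^ 9 * (Kern (t * a) (fst w - snd w) * (u (fst w))\<^sup>2 * (u (snd w))\<^sup>2)"
      unfolding H_def Kern_scale[OF a t] using power_Suc[of t 8, simplified]
      by (simp add: power_mult_distrib algebra_simps)
    then have "H = (\<lambda>w. t ^ 9 * (Kern (t * a) (fst w - snd w) * (u (fst w))\<^sup>2 * (u (snd w))\<^sup>2))"
      by (rule ext)
    then show ?thesis by simp
  qed
  also have "t ^ 9 * X / t ^ 6 = t ^ 3 * X" for X
  proof -
    have "t ^ 3 * X * t ^ 6 = t ^ 9 * X"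
      using power_add[of t 3 6] by (simp add: ac_simps)
    then show ?thesis using t by (simp add: divide_eq_eq)
  qed
  finally show ?thesis .
qed

lemma alg:
  fixes A V Vb W B P Q p t3 :: real
  assumes "p \<noteq> 0" "t3 \<noteq> 0"
  shows "(1/2*A + Q/4*V - 1/p*B) - (1/2*(t3*A) + Q/4*(t3*Vb) - 1/p*(P*(B/t3)))
     - (1-t3)/3*(3/2*A - (2*p-3)/p*B + 3*Q/4*W)
     = Q/4*(V - t3*Vb - (1-t3)*W) + B/p*(P/t3 - 1 - (2*p-3)/3*(t3-1))"
  using assms by (simp add: field_simps)

theorem lemma5p1:
  fixes a q p t :: real and u :: "R3 \<Rightarrow> real"
  assumes "a > 0" and "q \<noteq> 0" and "4 < p" and "p < 6"
    and "t > 0" and "Er a u"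
  shows "I_a a q p u - I_a a q p (\<lambda>x. t\<^sup>2 * u (t *\<^sub>R x)) \<ge> (1 - t ^ 3) / 3 * J_a a q p u"
proof -
  have a: "a > 0" and t: "t > 0" using assms by auto
  have D: "D12 u" using assms(6) by (simp add: Er_def)
  have fin0: "(\<integral>\<^sup>+z. ennreal (Kern a (fst z - snd z) * (u (fst z))\<^sup>2 * (u (snd z))\<^sup>2) \<partial>(lborel \<Otimes>\<^sub>M lborel)) < \<infinity>"
    using assms(6) by (simp add: Er_def)
  have um[measurable]: "u \<in> borel_measurable borel" using D by (simp add: D12_def)
  define V where "V = (\<integral>z. Kern a (fst z - snd z) * (u (fst z))\<^sup>2 * (u (snd z))\<^sup>2 \<partial>(lborel::(R3\<times>R3) measure))"
  define Vb where "Vb = (\<integral>z. Kern (t * a) (fst z - snd z) * (u (fst z))\<^sup>2 * (u (snd z))\<^sup>2 \<partial>(lborel::(R3\<times>R3) measure))"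
  define W where "W = (\<integral>z. KernJ a (fst z - snd z) * (u (fst z))\<^sup>2 * (u (snd z))\<^sup>2 \<partial>(lborel::(R3\<times>R3) measure))"
  define A where "A = grad_sq u"
  define B where "B = Lp_pow p u"
  have gs: "grad_sq (\<lambda>x. t\<^sup>2 * u (t *\<^sub>R x)) = t ^ 3 * A"
    using D12_scale[OF t D] by (simp add: A_def)
  have Lp: "Lp_pow p (\<lambda>x. t\<^sup>2 * u (t *\<^sub>R x)) = (t\<^sup>2) powr p * (B / t ^ 3)"
    unfolding B_def by (rule Lp_scale[OF t um])
  have Vs: "Vpot a (\<lambda>x. (t\<^sup>2 * u (t *\<^sub>R x))\<^sup>2) (\<lambda>x. (t\<^sup>2 * u (t *\<^sub>R x))\<^sup>2) = t ^ 3 * Vb"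
    unfolding Vb_def by (rule V_scale[OF a t um])
  have Vd: "Vpot a (\<lambda>x. (u x)\<^sup>2) (\<lambda>x. (u x)\<^sup>2) = V"
    by (simp add: Vpot_def lborel_prod V_def)
  have Iu: "I_a a q p u = 1/2 * A + q\<^sup>2/4 * V - 1/p * B"
    by (simp add: I_a_def A_def B_def Vd)
  have Iut: "I_a a q p (\<lambda>x. t\<^sup>2 * u (t *\<^sub>R x)) = 1/2 * (t ^ 3 * A) + q\<^sup>2/4 * (t ^ 3 * Vb) - 1/p * ((t\<^sup>2) powr p * (B / t ^ 3))"
    unfolding I_a_def gs Lp Vs ..
  have Ju: "J_a a q p u = 3/2 * A - (2*p-3)/p * B + 3 * q\<^sup>2 / 4 * W"
    by (simp add: J_a_def lborel_prod W_def A_def B_def)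
  have mK: "(\<lambda>z::R3\<times>R3. Kern c (fst z - snd z) * (u (fst z))\<^sup>2 * (u (snd z))\<^sup>2) \<in> borel_measurable borel" for c
  proof -
    have "(\<lambda>z::R3\<times>R3. Kern c (fst z - snd z) * (u (fst z))\<^sup>2 * (u (snd z))\<^sup>2) \<in> borel_measurable (borel \<Otimes>\<^sub>M borel)"
      by measurable
    then show ?thesis by (simp add: borel_prod)
  qed
  have mJ: "(\<lambda>z::R3\<times>R3. KernJ a (fst z - snd z) * (u (fst z))\<^sup>2 * (u (snd z))\<^sup>2) \<in> borel_measurable borel"
  proof -
    have "(\<lambda>z::R3\<times>R3. KernJ a (fst z - snd z) * (u (fst z))\<^sup>2 * (u (snd z))\<^sup>2) \<in> borel_measurable (borel \<Otimes>\<^sub>M borel)"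
      by measurable
    then show ?thesis by (simp add: borel_prod)
  qed
  have intV: "integrable lborel (\<lambda>z::R3\<times>R3. Kern a (fst z - snd z) * (u (fst z))\<^sup>2 * (u (snd z))\<^sup>2)"
  proof (rule integrableI_nonneg)
    show "(\<lambda>z::R3\<times>R3. Kern a (fst z - snd z) * (u (fst z))\<^sup>2 * (u (snd z))\<^sup>2) \<in> borel_measurable lborel"
      using mK by simp
    show "AE z in lborel. 0 \<le> Kern a (fst z - snd z) * (u (fst z))\<^sup>2 * (u (snd z))\<^sup>2"
      using Kern_nonneg[OF a] by (intro AE_I2) simp
    show "(\<integral>\<^sup>+z. ennreal (Kern a (fst z - snd z) * (u (fst z))\<^sup>2 * (u (snd z))\<^sup>2) \<partial>lborel) < \<infinity>"
      using fin0 by (simp add: lborel_prod)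
  qed
  have intW: "integrable lborel (\<lambda>z::R3\<times>R3. KernJ a (fst z - snd z) * (u (fst z))\<^sup>2 * (u (snd z))\<^sup>2)"
  proof (rule Bochner_Integration.integrable_bound[OF intV])
    show "(\<lambda>z::R3\<times>R3. KernJ a (fst z - snd z) * (u (fst z))\<^sup>2 * (u (snd z))\<^sup>2) \<in> borel_measurable lborel"
      using mJ by simp
    show "AE z in lborel. norm (KernJ a (fst z - snd z) * (u (fst z))\<^sup>2 * (u (snd z))\<^sup>2)
        \<le> norm (Kern a (fst z - snd z) * (u (fst z))\<^sup>2 * (u (snd z))\<^sup>2)"
    proof (intro AE_I2)
      fix z :: "R3 \<times> R3"
      have "KernJ a (fst z - snd z) * ((u (fst z))\<^sup>2 * (u (snd z))\<^sup>2) \<le> Kern a (fst z - snd z) * ((u (fst z))\<^sup>2 * (u (snd z))\<^sup>2)"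
        by (intro mult_right_mono KernJ_le[OF a]) simp
      then show "norm (KernJ a (fst z - snd z) * (u (fst z))\<^sup>2 * (u (snd z))\<^sup>2)
        \<le> norm (Kern a (fst z - snd z) * (u (fst z))\<^sup>2 * (u (snd z))\<^sup>2)"
        using KernJ_nonneg[OF a, of "fst z - snd z"] Kern_nonneg[OF a, of "fst z - snd z"]
        by (simp add: abs_mult ac_simps)
    qed
  qed
  have W0: "W \<ge> 0" unfolding W_def
    by (intro integral_nonneg_AE AE_I2) (simp add: KernJ_nonneg[OF a])
  have WV: "W \<le> V" unfolding W_def V_def
  proof (rule integral_mono[OF intW intV])
    fix z :: "R3 \<times> R3"
    show "KernJ a (fst z - snd z) * (u (fst z))\<^sup>2 * (u (snd z))\<^sup>2 \<le> Kern a (fst z - snd z) * (u (fst z))\<^sup>2 * (u (snd z))\<^sup>2"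
      using mult_right_mono[OF KernJ_le[OF a, of "fst z - snd z"], of "(u (fst z))\<^sup>2 * (u (snd z))\<^sup>2"]
      by (simp add: ac_simps)
  qed
  have Vineq: "V - t ^ 3 * Vb - (1 - t ^ 3) * W \<ge> 0"
  proof (cases "integrable lborel (\<lambda>z::R3\<times>R3. Kern (t * a) (fst z - snd z) * (u (fst z))\<^sup>2 * (u (snd z))\<^sup>2)")
    case True
    let ?fV = "\<lambda>z::R3\<times>R3. Kern a (fst z - snd z) * (u (fst z))\<^sup>2 * (u (snd z))\<^sup>2"
    let ?fB = "\<lambda>z::R3\<times>R3. Kern (t * a) (fst z - snd z) * (u (fst z))\<^sup>2 * (u (snd z))\<^sup>2"
    let ?fW = "\<lambda>z::R3\<times>R3. KernJ a (fst z - snd z) * (u (fst z))\<^sup>2 * (u (snd z))\<^sup>2"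
    have i1: "integrable lborel (\<lambda>z. t ^ 3 * ?fB z)" using True by simp
    have i2: "integrable lborel (\<lambda>z. (1 - t ^ 3) * ?fW z)" using intW by simp
    have i3: "integrable lborel (\<lambda>z. ?fV z - t ^ 3 * ?fB z)"
      by (rule Bochner_Integration.integrable_diff[OF intV i1])
    have "(\<integral>z. ?fV z - t ^ 3 * ?fB z - (1 - t ^ 3) * ?fW z \<partial>lborel)
        = (\<integral>z. ?fV z - t ^ 3 * ?fB z \<partial>lborel) - (\<integral>z. (1 - t ^ 3) * ?fW z \<partial>lborel)"
      by (rule Bochner_Integration.integral_diff[OF i3 i2])
    also have "(\<integral>z. ?fV z - t ^ 3 * ?fB z \<partial>lborel) = V - (\<integral>z. t ^ 3 * ?fB z \<partial>lborel)"
      unfolding V_def by (rule Bochner_Integration.integral_diff[OF intV i1])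
    finally have eq: "(\<integral>z. ?fV z - t ^ 3 * ?fB z - (1 - t ^ 3) * ?fW z \<partial>lborel) = V - t ^ 3 * Vb - (1 - t ^ 3) * W"
      by (simp add: Vb_def W_def)
    have "(\<integral>z. ?fV z - t ^ 3 * ?fB z - (1 - t ^ 3) * ?fW z \<partial>lborel) \<ge> 0"
    proof (intro integral_nonneg_AE AE_I2)
      fix z :: "R3 \<times> R3"
      have "?fV z - t ^ 3 * ?fB z - (1 - t ^ 3) * ?fW z =
          (Kern a (fst z - snd z) - t ^ 3 * Kern (t * a) (fst z - snd z) - (1 - t ^ 3) * KernJ a (fst z - snd z))
          * ((u (fst z))\<^sup>2 * (u (snd z))\<^sup>2)"
        by (simp add: algebra_simps)
      also have "\<dots> \<ge> 0" using kern_comb[OF a t, of "fst z - snd z"] by simp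
      finally show "0 \<le> ?fV z - t ^ 3 * ?fB z - (1 - t ^ 3) * ?fW z" .
    qed
    then show ?thesis using eq by simp
  next
    case False
    then have "Vb = 0" unfolding Vb_def by (rule not_integrable_integral_eq)
    moreover have "(1 - t ^ 3) * W \<le> V"
    proof (cases "t \<le> 1")
      case True
      then have "t ^ 3 \<le> 1" using t by (simp add: power_le_one)
      then have "(1 - t ^ 3) * W \<le> W" using W0 t by (intro mult_left_le_one_le) auto
      then show ?thesis using WV by simp
    next
      case False
      then have "t ^ 3 > 1" by (simp add: one_less_power)
      then have "(1 - t ^ 3) * W \<le> 0" using W0 by (intro mult_nonpos_nonneg) auto
      then show ?thesis using WV W0 by simp
    qed
    ultimately show ?thesis by simp
  qed
  have B0: "B \<ge> 0" unfolding B_def Lp_pow_def by (intro integral_nonneg_AE AE_I2) simp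
  have Bi: "(t\<^sup>2) powr p / t ^ 3 - 1 - (2 * p - 3) / 3 * (t ^ 3 - 1) \<ge> 0"
    by (rule B_ineq) (use t assms(3) in auto)
  have p0: "p \<noteq> 0" and t30: "t ^ 3 \<noteq> 0" using assms(3) t by auto
  have "I_a a q p u - I_a a q p (\<lambda>x. t\<^sup>2 * u (t *\<^sub>R x)) - (1 - t ^ 3) / 3 * J_a a q p u
      = q\<^sup>2/4 * (V - t ^ 3 * Vb - (1 - t ^ 3) * W) + B/p * ((t\<^sup>2) powr p / t ^ 3 - 1 - (2 * p - 3) / 3 * (t ^ 3 - 1))"
    unfolding Iu Iut Ju by (rule alg[OF p0 t30])
  also have "\<dots> \<ge> 0"
    using Vineq Bi B0 assms(3) by (intro add_nonneg_nonneg mult_nonneg_nonneg) auto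
  finally show ?thesis by simp
qed

end
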